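(* Let $C^{bu}(x,y,t;z)=\sum_{\nu\in\mathcal{CP}^{bu}}x^{v(\nu)}y^{h(\nu)}t^{a(\nu)}z^{c(\nu)}$. Then $$C^{bu}(x,y,1;z)=\frac{xy(1-yz)}{(1-yz)^2-x},$$ and for $|t|<1$, $$C^{bu}(x,y,t;z)=\sum_{j\ge0}\frac{y(xt)^{j+1}}{(1-yt^{j+1}z)\prod_{i=1}^{j}(1-yt^iz)^2}.$$
   Context: A cell is a unit square in the plane whose center is an integer point and whose sides are parallel to the axes. A polyomino is a finite set of cells which is connected under edge-adjacency; polyominoes are considered up to translation. A column (resp. row) is the set of cells whose centers have a fixed $x$- (resp. $y$-) coordinate; a polyomino is convex if each column and each row is a contiguous block of cells. Number the columns $1,2,\dots$ from left to right; $u(\nu,j)$ and $b(\nu,j)$ denote the heights (center $y$-coordinates) of the top and bottom cells of column $j$. $\mathcal{CP}^{bu}$ is the set of nonempty convex polyominoes $\nu$ such that for all columns $j$ and all $s\ge j+1$, $u(\nu,s)\le u(\nu,j)$ and $b(\nu,s)\ge b(\nu,j)$. For $\nu$: $v(\nu)$ = number of columns, $h(\nu)$ = number of rows, $a(\nu)$ = number of cells, $c(\nu)$ = number of cells in the first (leftmost) column minus $1$. *)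

theory Defs
  imports "HOL-Analysis.Analysis"
begin

text \<open>A cell is identified with its integer centre (x, y).
  Polyominoes are considered up to translation; we represent each translation
  class by its unique representative whose leftmost column has x-coordinate 0
  and whose lowest row has y-coordinate 0.\<close>

type_synonym cell = "int \<times> int"

definition edge_adj :: "cell \<Rightarrow> cell \<Rightarrow> bool" where
  "edge_adj c d \<longleftrightarrow> \<bar>fst c - fst d\<bar> + \<bar>snd c - snd d\<bar> = 1"

definition polyomino :: "cell set \<Rightarrow> bool" where
  "polyomino P \<longleftrightarrow> finite P \<and> P \<noteq> {} \<and>
     (\<forall>c\<in>P. \<forall>d\<in>P. (c, d) \<in> {(p, q). p \<in> P \<and> q \<in> P \<and> edge_adj p q}\<^sup>*)"

definition column :: "cell set \<Rightarrow> int \<Rightarrow> int set" where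
  "column P i = {y. (i, y) \<in> P}"

definition row :: "cell set \<Rightarrow> int \<Rightarrow> int set" where
  "row P j = {x. (x, j) \<in> P}"

definition convex_poly :: "cell set \<Rightarrow> bool" where
  "convex_poly P \<longleftrightarrow> polyomino P \<and>
     (\<forall>i y1 y2 y. y1 \<in> column P i \<longrightarrow> y2 \<in> column P i \<longrightarrow> y1 \<le> y \<longrightarrow> y \<le> y2 \<longrightarrow> y \<in> column P i) \<and>
     (\<forall>j x1 x2 x. x1 \<in> row P j \<longrightarrow> x2 \<in> row P j \<longrightarrow> x1 \<le> x \<longrightarrow> x \<le> x2 \<longrightarrow> x \<in> row P j)"

definition utop :: "cell set \<Rightarrow> int \<Rightarrow> int" where
  "utop P i = Max (column P i)"

definition bbot :: "cell set \<Rightarrow> int \<Rightarrow> int" where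
  "bbot P i = Min (column P i)"

definition normalized :: "cell set \<Rightarrow> bool" where
  "normalized P \<longleftrightarrow> Min (fst ` P) = 0 \<and> Min (snd ` P) = 0"

definition CPbu :: "cell set set" where
  "CPbu = {P. convex_poly P \<and> normalized P \<and>
     (\<forall>j\<in>fst ` P. \<forall>s\<in>fst ` P. j < s \<longrightarrow> utop P s \<le> utop P j \<and> bbot P s \<ge> bbot P j)}"

definition vcols :: "cell set \<Rightarrow> nat" where "vcols P = card (fst ` P)"
definition hrows :: "cell set \<Rightarrow> nat" where "hrows P = card (snd ` P)"
definition area :: "cell set \<Rightarrow> nat" where "area P = card P"
definition cfirst :: "cell set \<Rightarrow> nat" where
  "cfirst P = card (column P (Min (fst ` P))) - 1"

definition weight :: "complex \<Rightarrow> complex \<Rightarrow> complex \<Rightarrow> complex \<Rightarrow> cell set \<Rightarrow> complex" where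
  "weight x y t z P = x ^ vcols P * y ^ hrows P * t ^ area P * z ^ cfirst P"

end

theory Submission
  imports Defs
begin

lemma has_sum_mult_prod:
  fixes g :: "'a \<Rightarrow> complex" and h :: "'b \<Rightarrow> complex"
  assumes g: "(g has_sum G) A" and h: "(h has_sum H) B"
    and gn: "(\<lambda>a. norm (g a)) summable_on A" and hn: "(\<lambda>b. norm (h b)) summable_on B"
  shows "((\<lambda>(a,b). g a * h b) has_sum (G*H)) (A \<times> B)"
    and "(\<lambda>p. norm ((\<lambda>(a,b). g a * h b) p)) summable_on (A \<times> B)"
proof -
  have ns: "(\<lambda>p. norm ((\<lambda>(a,b). g a * h b) p)) summable_on Sigma A (\<lambda>_. B)"
  proof (rule summable_on_SigmaI[where g = "\<lambda>a. norm (g a) * infsum (\<lambda>b. norm (h b)) B"])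
    fix a assume "a \<in> A"
    show "((\<lambda>b. norm ((\<lambda>(a, b). g a * h b) (a, b))) has_sum norm (g a) * infsum (\<lambda>b. norm (h b)) B) B"
      using has_sum_cmult_right[OF has_sum_infsum[OF hn], of "norm (g a)"] by (simp add: norm_mult)
  next
    show "(\<lambda>a. norm (g a) * infsum (\<lambda>b. norm (h b)) B) summable_on A"
      using summable_on_cmult_left[OF gn] by simp
  qed auto
  then show "(\<lambda>p. norm ((\<lambda>(a,b). g a * h b) p)) summable_on (A \<times> B)" .
  have s: "(\<lambda>(a,b). g a * h b) summable_on Sigma A (\<lambda>_. B)"
    using abs_summable_summable[OF ns] .
  show "((\<lambda>(a,b). g a * h b) has_sum (G*H)) (A \<times> B)"
  proof (rule has_sum_SigmaI[OF _ _ s])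
    fix a assume "a \<in> A"
    show "((\<lambda>b. (\<lambda>(a, b). g a * h b) (a, b)) has_sum g a * H) B"
      using has_sum_cmult_right[OF h] by simp
  next
    show "((\<lambda>a. g a * H) has_sum G * H) A" using has_sum_cmult_left[OF g] .
  qed
qed

lemma geo_has_sum:
  fixes q :: complex
  assumes "norm q < 1"
  shows "((\<lambda>n. q ^ n) has_sum (1 / (1 - q))) UNIV" and "(\<lambda>n. norm (q ^ n)) summable_on UNIV"
proof -
  have sn: "summable (\<lambda>n. norm (q ^ n))"
    using assms by (simp add: norm_power summable_geometric)
  show "((\<lambda>n. q ^ n) has_sum (1 / (1 - q))) UNIV"
    by (rule norm_summable_imp_has_sum[OF sn]) (use geometric_sums[OF assms] in \<open>simp add: divide_inverse\<close>)
  have "((\<lambda>n. norm (q ^ n)) has_sum (suminf (\<lambda>n. norm (q ^ n)))) UNIV"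
    by (rule norm_summable_imp_has_sum) (use sn summable_sums in auto)
  then show "(\<lambda>n. norm (q ^ n)) summable_on UNIV" by (rule has_sum_imp_summable)
qed

fun nestc :: "(nat \<times> nat) list \<Rightarrow> bool" where
  "nestc [] = True"
| "nestc [a] = (fst a \<le> snd a)"
| "nestc (a # b # r) = (fst a \<le> fst b \<and> snd b \<le> snd a \<and> nestc (b # r))"
definition validc :: "(nat \<times> nat) list \<Rightarrow> bool" where
  "validc cs \<longleftrightarrow> cs \<noteq> [] \<and> fst (hd cs) = 0 \<and> nestc cs"

lemma nestc_shift: "nestc (map (\<lambda>(b,u). (b+d, u+d)) cs) \<longleftrightarrow> nestc cs"
  by (induction cs rule: nestc.induct) auto

lemma nestc_unshift: "\<forall>p\<in>set cs. d \<le> fst p \<and> d \<le> snd p \<Longrightarrow> nestc (map (\<lambda>(b,u). (b-d, u-d)) cs) \<longleftrightarrow> nestc cs"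
  by (induction cs rule: nestc.induct) auto

lemma nestc_Cons: "nestc (a # r) \<longleftrightarrow> fst a \<le> snd a \<and> (r \<noteq> [] \<longrightarrow> fst a \<le> fst (hd r) \<and> snd (hd r) \<le> snd a) \<and> nestc r"
proof (induction r arbitrary: a)
  case Nil then show ?case by simp
next
  case (Cons b r) then show ?case by auto
qed
lemma nestc_iff: "nestc cs \<longleftrightarrow> (\<forall>k<length cs. fst (cs!k) \<le> snd (cs!k)) \<and>
     (\<forall>k. Suc k < length cs \<longrightarrow> fst (cs!k) \<le> fst (cs!Suc k) \<and> snd (cs!Suc k) \<le> snd (cs!k))"
proof (induction cs rule: nestc.induct)
  case (3 a b r)
  show ?case
  proof
    assume H: "nestc (a # b # r)"
    then have ab: "fst a \<le> fst b" "snd b \<le> snd a" and nb: "nestc (b # r)" by auto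
    have bb: "fst b \<le> snd b" using nb nestc_Cons[of b r] by simp
    have R: "(\<forall>k<length (b # r). fst ((b # r)!k) \<le> snd ((b # r)!k)) \<and>
     (\<forall>k. Suc k < length (b # r) \<longrightarrow> fst ((b # r)!k) \<le> fst ((b # r)!Suc k) \<and> snd ((b # r)!Suc k) \<le> snd ((b # r)!k))"
      using 3 nb by blast
    show "(\<forall>k<length (a # b # r). fst ((a # b # r)!k) \<le> snd ((a # b # r)!k)) \<and>
     (\<forall>k. Suc k < length (a # b # r) \<longrightarrow> fst ((a # b # r)!k) \<le> fst ((a # b # r)!Suc k) \<and> snd ((a # b # r)!Suc k) \<le> snd ((a # b # r)!k))"
    proof (rule conjI; intro allI impI)
      fix k assume k: "k < length (a # b # r)"
      show "fst ((a # b # r)!k) \<le> snd ((a # b # r)!k)"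
      proof (cases k)
        case 0 then show ?thesis using ab bb by simp
      next
        case (Suc m) then show ?thesis using R k by simp
      qed
    next
      fix k assume k: "Suc k < length (a # b # r)"
      show "fst ((a # b # r)!k) \<le> fst ((a # b # r)!Suc k) \<and> snd ((a # b # r)!Suc k) \<le> snd ((a # b # r)!k)"
      proof (cases k)
        case 0 then show ?thesis using ab by simp
      next
        case (Suc m) then show ?thesis using R k by simp
      qed
    qed
  next
    assume h: "(\<forall>k<length (a # b # r). fst ((a # b # r)!k) \<le> snd ((a # b # r)!k)) \<and>
     (\<forall>k. Suc k < length (a # b # r) \<longrightarrow> fst ((a # b # r)!k) \<le> fst ((a # b # r)!Suc k) \<and> snd ((a # b # r)!Suc k) \<le> snd ((a # b # r)!k))"
    have "(\<forall>k<length (b#r). fst ((b#r)!k) \<le> snd ((b#r)!k)) \<and>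
     (\<forall>k. Suc k < length (b#r) \<longrightarrow> fst ((b#r)!k) \<le> fst ((b#r)!Suc k) \<and> snd ((b#r)!Suc k) \<le> snd ((b#r)!k))"
    proof (rule conjI; intro allI impI)
      fix k assume "k < length (b#r)" then show "fst ((b#r)!k) \<le> snd ((b#r)!k)" using h[THEN conjunct1, rule_format, of "Suc k"] by simp
    next
      fix k assume "Suc k < length (b#r)" then show "fst ((b#r)!k) \<le> fst ((b#r)!Suc k) \<and> snd ((b#r)!Suc k) \<le> snd ((b#r)!k)"
        using h[THEN conjunct2, rule_format, of "Suc k"] by simp
    qed
    then have "nestc (b # r)" using 3 by blast
    then show "nestc (a # b # r)" using h[THEN conjunct2, rule_format, of 0] by simp
  qed
qed auto

lemma nestc_mono: assumes "nestc cs" "k \<le> k'" "k' < length cs" shows "fst (cs!k) \<le> fst (cs!k') \<and> snd (cs!k') \<le> snd (cs!k)"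
  using assms(2,3)
proof (induction k')
  case (Suc n)
  show ?case
  proof (cases "k = Suc n")
    case False
    then have kn: "k \<le> n" using Suc by simp
    have st: "fst (cs!n) \<le> fst (cs!Suc n) \<and> snd (cs!Suc n) \<le> snd (cs!n)"
      using assms(1) Suc.prems unfolding nestc_iff by blast
    have "fst (cs!k) \<le> fst (cs!n) \<and> snd (cs!n) \<le> snd (cs!k)" using Suc.IH kn Suc.prems by simp
    then show ?thesis using st by linarith
  qed simp
qed simp

lemma nestc_ge_hd: "nestc cs \<Longrightarrow> p \<in> set cs \<Longrightarrow> fst (hd cs) \<le> fst p \<and> fst p \<le> snd p \<and> snd p \<le> snd (hd cs)"
proof (induction cs arbitrary: p rule: nestc.induct)
  case (3 a b r)
  have ab: "fst a \<le> fst b" "snd b \<le> snd a" and nb: "nestc (b # r)" using 3(2) by auto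
  have bb: "fst b \<le> snd b" using nb nestc_Cons[of b r] by simp
  show ?case
  proof (cases "p = a")
    case True then show ?thesis using ab bb by simp
  next
    case False
    then have "p \<in> set (b # r)" using 3(3) by simp
    then have "fst b \<le> fst p \<and> fst p \<le> snd p \<and> snd p \<le> snd b" using 3(1)[OF nb] by simp
    then show ?thesis using ab by simp
  qed
qed auto
definition Warea :: "(nat \<times> nat) list \<Rightarrow> nat" where
  "Warea cs = sum_list (map (\<lambda>(b,u). u - b + 1) cs)"

definition W :: "complex \<Rightarrow> complex \<Rightarrow> complex \<Rightarrow> complex \<Rightarrow> (nat \<times> nat) list \<Rightarrow> complex" where
  "W x y t z cs = x ^ length cs * y ^ (snd (hd cs) + 1) * z ^ snd (hd cs) * t ^ Warea cs"

definition Vj :: "nat \<Rightarrow> (nat \<times> nat) list set" where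
  "Vj j = {cs. validc cs \<and> length cs = Suc j}"

definition F :: "nat \<Rightarrow> complex \<Rightarrow> complex \<Rightarrow> complex \<Rightarrow> complex \<Rightarrow> complex" where
  "F j x y t z = y * (x * t) ^ (j + 1) /
                 ((1 - y * t ^ (j + 1) * z) * (\<Prod>i = 1..j. (1 - y * t ^ i * z)\<^sup>2))"

definition gstep :: "nat \<Rightarrow> nat \<Rightarrow> (nat \<times> nat) list \<Rightarrow> (nat \<times> nat) list" where
  "gstep d e cs = (0, snd (hd cs) + d + e) # map (\<lambda>(b,u). (b+d, u+d)) cs"

definition ginv :: "(nat \<times> nat) list \<Rightarrow> nat \<times> nat \<times> (nat \<times> nat) list" where
  "ginv cs = (let r = tl cs; d = fst (hd r) in (d, snd (hd cs) - snd (hd r), map (\<lambda>(b,u). (b-d, u-d)) r))"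

lemma hd_map_shift: "cs \<noteq> [] \<Longrightarrow> hd (map (\<lambda>(b,u). (b+d, u+d)) cs) = (fst (hd cs) + d, snd (hd cs) + d)"
  by (cases cs) auto

lemma ginv_gstep: "validc cs \<Longrightarrow> ginv (gstep d e cs) = (d, e, cs)"
proof -
  assume v: "validc cs"
  then have ne: "cs \<noteq> []" and h0: "fst (hd cs) = 0" by (auto simp: validc_def)
  have "map (\<lambda>(b,u). (b-d, u-d)) (map (\<lambda>(b::nat,u::nat). (b+d, u+d)) cs) = cs"
    by (induction cs) auto
  then show ?thesis using ne h0 by (simp add: ginv_def gstep_def hd_map_shift Let_def)
qed

lemma gstep_valid: "validc cs \<Longrightarrow> validc (gstep d e cs)"
proof -
  assume v: "validc cs"
  then have ne: "cs \<noteq> []" and h0: "fst (hd cs) = 0" and n: "nestc cs" by (auto simp: validc_def)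
  show ?thesis unfolding validc_def gstep_def
    using ne h0 n nestc_shift[of d cs] nestc_ge_hd[OF n, of "hd cs"]
    by (auto simp: nestc_Cons[of "(0, _)"] hd_map_shift)
qed

lemma gstep_ginv: "validc cs \<Longrightarrow> length cs \<ge> 2 \<Longrightarrow> (case ginv cs of (d, e, r) \<Rightarrow> gstep d e r = cs \<and> validc r)"
proof -
  assume v: "validc cs" and l: "length cs \<ge> 2"
  obtain a r where cs: "cs = a # r" using l by (cases cs) auto
  then have rne: "r \<noteq> []" using l by auto
  have n: "nestc cs" and a0: "fst a = 0" using v cs by (auto simp: validc_def)
  then have nr: "nestc r" and ar: "fst (hd r) \<le> snd (hd r)" "snd (hd r) \<le> snd a"
    using nestc_Cons[of a r] rne cs nestc_ge_hd[of r "hd r"] by auto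
  define d where "d = fst (hd r)"
  have ge: "\<forall>p\<in>set r. d \<le> fst p \<and> d \<le> snd p" using nestc_ge_hd[OF nr] d_def by fastforce
  have mm: "map (\<lambda>(b,u). (b+d, u+d)) (map (\<lambda>(b,u). (b-d, u-d)) r) = r"
    using ge by (induction r) auto
  have hdm: "hd (map (\<lambda>(b,u). (b-d, u-d)) r) = (0, snd (hd r) - d)"
    using rne d_def by (cases r) auto
  have vr: "validc (map (\<lambda>(b,u). (b-d, u-d)) r)"
    unfolding validc_def using rne hdm nestc_unshift[of r d] ge nr by auto
  show ?thesis
    using cs a0 ar d_def mm hdm vr rne
    by (simp add: ginv_def gstep_def Let_def prod_eq_iff)
qed

lemma Warea_Nil: "Warea [] = 0"
  by (simp add: Warea_def)

lemma Warea_Cons: "Warea (a # cs) = snd a - fst a + 1 + Warea cs"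
  by (simp add: Warea_def split_beta)

lemma Warea_shift: "Warea (map (\<lambda>(b,u). (b+d, u+d)) cs) = Warea cs"
  by (induction cs) (simp_all add: Warea_Cons split_beta Warea_Nil)

lemma W_gstep: "validc cs \<Longrightarrow> W x y t z (gstep d e cs) = x * ((y*z*t)^d * ((y*z*t)^e * W x (y*t) t z cs))"
proof -
  assume v: "validc cs"
  have wa: "Warea (gstep d e cs) = snd (hd cs) + d + e + 1 + Warea cs"
    by (simp only: gstep_def Warea_Cons Warea_shift) simp
  show ?thesis unfolding W_def wa by (simp add: gstep_def power_add power_mult_distrib algebra_simps)
qed

lemma F_Suc:
  shows "F (Suc j) x y t z = x / (1 - y*z*t)^2 * F j x (y*t) t z"
proof -
  have p: "(\<Prod>i = 1..Suc j. (1 - y * t ^ i * z)\<^sup>2) = (1 - y*z*t)^2 * (\<Prod>i = 1..j. (1 - (y*t) * t ^ i * z)\<^sup>2)"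
  proof -
    have "(\<Prod>i = 1..Suc j. (1 - y * t ^ i * z)\<^sup>2) = (1 - y * t ^ 1 * z)\<^sup>2 * (\<Prod>i = Suc 1..Suc j. (1 - y * t ^ i * z)\<^sup>2)"
      by (subst prod.atLeast_Suc_atMost) auto
    also have "(\<Prod>i = Suc 1..Suc j. (1 - y * t ^ i * z)\<^sup>2) = (\<Prod>i = 1..j. (1 - (y*t) * t ^ i * z)\<^sup>2)"
      by (subst prod.atLeast_Suc_atMost_Suc_shift) (simp add: o_def mult_ac)
    finally show ?thesis by (simp add: mult_ac)
  qed
  have e: "(y*t) * t ^ (j + 1) = y * t ^ (Suc j + 1)" by (simp add: mult_ac)
  show ?thesis unfolding F_def p e
    by (simp add: divide_inverse inverse_mult_distrib power_Suc mult_ac)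
qed


lemma Vj0: "cs \<in> Vj 0 \<longleftrightarrow> (\<exists>u. cs = [(0,u)])"
proof
  assume "cs \<in> Vj 0"
  then have "validc cs" "length cs = 1" by (auto simp: Vj_def)
  then show "\<exists>u. cs = [(0,u)]" by (cases cs) (auto simp: validc_def prod_eq_iff)
qed (auto simp: Vj_def validc_def)

lemma norm_q: "norm (t::complex) \<le> 1 \<Longrightarrow> norm (y*z) < 1 \<Longrightarrow> norm (y*z*t) < 1"
proof -
  assume t: "norm t \<le> 1" and yz: "norm (y*z) < 1"
  have "norm (y*z*t) = norm (y*z) * norm t" by (simp add: norm_mult)
  also have "\<dots> \<le> norm (y*z)" using t by (simp add: mult_left_le)
  finally show ?thesis using yz by simp
qed

lemma sumV:
  assumes t: "norm t \<le> 1"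
  shows "norm (y*z) < 1 \<Longrightarrow> (W x y t z has_sum F j x y t z) (Vj j) \<and> (\<lambda>cs. norm (W x y t z cs)) summable_on Vj j"
proof (induction j arbitrary: y)
  case 0
  define q where "q = y*z*t"
  have q: "norm q < 1" using norm_q[OF t 0] q_def by simp
  note g1 = geo_has_sum(1)[OF q] and g2 = geo_has_sum(2)[OF q]
  have h1: "((\<lambda>u. x*y*t * q^u) has_sum (x*y*t*(1/(1-q)))) UNIV"
    by (rule has_sum_cmult_right[OF g1])
  have h2: "(\<lambda>u. norm (x*y*t * q^u)) summable_on UNIV"
    using summable_on_cmult_right[OF g2, of "norm (x*y*t)"] by (simp add: norm_mult)
  have Wu: "W x y t z [(0,u)] = x*y*t * q^u" for u
    by (simp add: W_def Warea_Cons Warea_Nil q_def power_mult_distrib mult_ac)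
  have Fv: "F 0 x y t z = x*y*t*(1/(1-q))"
    by (simp add: F_def q_def divide_inverse mult_ac)
  have "(W x y t z has_sum F 0 x y t z) (Vj 0) = ((\<lambda>u. x*y*t * q^u) has_sum (x*y*t*(1/(1-q)))) UNIV"
    by (rule has_sum_reindex_bij_witness[where i="\<lambda>u. [(0,u)]" and j="\<lambda>cs. snd (hd cs)"])
       (auto simp: Vj0 Wu Fv)
  moreover have "((\<lambda>cs. norm (W x y t z cs)) summable_on (Vj 0)) = ((\<lambda>u. norm (x*y*t * q^u)) summable_on UNIV)"
    by (rule summable_on_reindex_bij_witness[where i="\<lambda>u. [(0,u)]" and j="\<lambda>cs. snd (hd cs)"])
       (auto simp: Vj0 Wu)
  ultimately show ?case using h1 h2 by simp
next
  case (Suc j)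
  define q where "q = y*z*t"
  have q: "norm q < 1" using norm_q[OF t Suc.prems] q_def by simp
  note g1 = geo_has_sum(1)[OF q] and g2 = geo_has_sum(2)[OF q]
  have "norm ((y*t)*z) < 1" using norm_q[OF t Suc.prems] by (simp add: mult_ac)
  note IH = Suc.IH[OF this]
  note P1 = has_sum_mult_prod[OF g1 IH[THEN conjunct1] g2 IH[THEN conjunct2]]
  note P2 = has_sum_mult_prod[OF g1 P1(1) g2 P1(2)]
  define G where "G = (\<lambda>p. case p of (d, e, cs) \<Rightarrow> x * (q^d * (q^e * W x (y*t) t z cs)))"
  have G1: "(G has_sum (x * (1/(1-q) * (1/(1-q) * F j x (y*t) t z)))) (UNIV \<times> (UNIV \<times> Vj j))"
  proof -
    have "((\<lambda>p. x * (\<lambda>(a,b). q^a * (\<lambda>(a,b). q^a * W x (y*t) t z b) b) p) has_sum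
             (x * (1/(1-q) * (1/(1-q) * F j x (y*t) t z)))) (UNIV \<times> (UNIV \<times> Vj j))"
      by (rule has_sum_cmult_right[OF P2(1)])
    then show ?thesis unfolding G_def by (simp add: case_prod_unfold)
  qed
  have G2: "(\<lambda>p. norm (G p)) summable_on (UNIV \<times> (UNIV \<times> Vj j))"
  proof -
    have "(\<lambda>p. norm x * norm ((\<lambda>(a,b). q^a * (\<lambda>(a,b). q^a * W x (y*t) t z b) b) p)) summable_on (UNIV \<times> (UNIV \<times> Vj j))"
      by (rule summable_on_cmult_right[OF P2(2)])
    then show ?thesis unfolding G_def by (simp add: case_prod_unfold norm_mult)
  qed
  have Fv: "x * (1/(1-q) * (1/(1-q) * F j x (y*t) t z)) = F (Suc j) x y t z"
    by (simp add: F_Suc q_def power2_eq_square divide_inverse mult_ac)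
  have S1: "\<And>a. a \<in> UNIV \<times> (UNIV \<times> Vj j) \<Longrightarrow> ginv ((\<lambda>(d,e,cs). gstep d e cs) a) = a"
    by (auto simp: Vj_def ginv_gstep)
  have S2: "\<And>a. a \<in> UNIV \<times> (UNIV \<times> Vj j) \<Longrightarrow> (\<lambda>(d,e,cs). gstep d e cs) a \<in> Vj (Suc j)"
    by (auto simp: Vj_def gstep_valid) (simp add: gstep_def)
  have S3: "\<And>b. b \<in> Vj (Suc j) \<Longrightarrow> (\<lambda>(d,e,cs). gstep d e cs) (ginv b) = b \<and> ginv b \<in> UNIV \<times> (UNIV \<times> Vj j)"
  proof -
    fix b assume b: "b \<in> Vj (Suc j)"
    then have v: "validc b" and l: "length b = Suc (Suc j)" by (auto simp: Vj_def)
    obtain d e r where gi: "ginv b = (d, e, r)" by (cases "ginv b") auto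
    have "gstep d e r = b \<and> validc r" using gstep_ginv[OF v] l gi by simp
    moreover then have "length r = Suc j" using l by (auto simp: gstep_def)
    ultimately show "(\<lambda>(d,e,cs). gstep d e cs) (ginv b) = b \<and> ginv b \<in> UNIV \<times> (UNIV \<times> Vj j)"
      using gi by (simp add: Vj_def)
  qed
  have S5: "\<And>a. a \<in> UNIV \<times> (UNIV \<times> Vj j) \<Longrightarrow> W x y t z ((\<lambda>(d,e,cs). gstep d e cs) a) = G a"
    by (auto simp: Vj_def G_def W_gstep q_def)
  have "(G has_sum (x * (1/(1-q) * (1/(1-q) * F j x (y*t) t z)))) (UNIV \<times> (UNIV \<times> Vj j)) = (W x y t z has_sum F (Suc j) x y t z) (Vj (Suc j))"
    by (rule has_sum_reindex_bij_witness[where j="\<lambda>(d,e,cs). gstep d e cs" and i="ginv"])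
       (use S1 S2 S3 S5 Fv in auto)
  moreover have "((\<lambda>p. norm (G p)) summable_on (UNIV \<times> (UNIV \<times> Vj j))) = ((\<lambda>cs. norm (W x y t z cs)) summable_on (Vj (Suc j)))"
    by (rule summable_on_reindex_bij_witness[where j="\<lambda>(d,e,cs). gstep d e cs" and i="ginv"])
       (use S1 S2 S3 S5 in auto)
  ultimately show ?case using G1 G2 by simp
qed

lemma norm_one_minus: "norm (t::complex) \<le> 1 \<Longrightarrow> norm (y*z) < 1 \<Longrightarrow> 1 - norm (y*z) \<le> norm (1 - y * t ^ i * z)"
proof -
  assume t: "norm t \<le> 1" and yz: "norm (y*z) < 1"
  have "norm (y * t ^ i * z) = norm (y*z) * norm t ^ i" by (simp add: norm_mult norm_power mult_ac)
  also have "\<dots> \<le> norm (y*z)" using t by (simp add: mult_left_le power_le_one)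
  finally have a: "norm (y * t ^ i * z) \<le> norm (y*z)" .
  have "1 - norm (y * t ^ i * z) \<le> norm (1 - y * t ^ i * z)"
    using norm_triangle_ineq2[of 1 "y * t ^ i * z"] by simp
  then show ?thesis using a by linarith
qed

lemma F_bound:
  assumes t: "norm t \<le> 1" and yz: "norm (y*z) < 1"
  shows "norm (F j x y t z) \<le> norm y * norm x ^ (j+1) / (1 - norm (y*z)) ^ (2*j+1)"
proof -
  define c where "c = 1 - norm (y*z)"
  have c: "c > 0" using yz c_def by simp
  have nb: "\<And>i. c \<le> norm (1 - y * t ^ i * z)" using norm_one_minus[OF t yz] c_def by simp
  have num: "norm (y * (x * t) ^ (j + 1)) \<le> norm y * norm x ^ (j+1)"
  proof -
    have "norm (y * (x * t) ^ (j + 1)) = norm y * (norm x ^ (j+1) * norm t ^ (j+1))"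
      by (simp add: norm_mult norm_power power_mult_distrib)
    also have "\<dots> \<le> norm y * (norm x ^ (j+1) * 1)"
      using t by (intro mult_left_mono power_le_one) auto
    finally show ?thesis by simp
  qed
  have pr: "c ^ (2*j) \<le> (\<Prod>i = 1..j. norm (1 - y * t ^ i * z) ^ 2)"
  proof -
    have "(\<Prod>i = 1..j. c ^ 2) \<le> (\<Prod>i = 1..j. norm (1 - y * t ^ i * z) ^ 2)"
      by (rule prod_mono) (use c nb in \<open>auto intro: power_mono\<close>)
    moreover have "(\<Prod>i = 1..j. c ^ 2) = c ^ (2*j)" by (simp add: power_mult)
    ultimately show ?thesis by simp
  qed
  have den: "c ^ (2*j+1) \<le> norm ((1 - y * t ^ (j + 1) * z) * (\<Prod>i = 1..j. (1 - y * t ^ i * z)\<^sup>2))"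
  proof -
    have "norm ((1 - y * t ^ (j + 1) * z) * (\<Prod>i = 1..j. (1 - y * t ^ i * z)\<^sup>2))
          = norm (1 - y * t ^ (j + 1) * z) * (\<Prod>i = 1..j. norm (1 - y * t ^ i * z) ^ 2)"
      by (simp add: norm_mult prod_norm[symmetric] norm_power)
    moreover have "c * c ^ (2*j) \<le> norm (1 - y * t ^ (j + 1) * z) * (\<Prod>i = 1..j. norm (1 - y * t ^ i * z) ^ 2)"
      by (rule mult_mono[OF nb pr]) (use c in auto)
    ultimately show ?thesis by simp
  qed
  have "norm (F j x y t z) = norm (y * (x * t) ^ (j + 1)) / norm ((1 - y * t ^ (j + 1) * z) * (\<Prod>i = 1..j. (1 - y * t ^ i * z)\<^sup>2))"
    by (simp add: F_def norm_divide)
  also have "\<dots> \<le> norm y * norm x ^ (j+1) / c ^ (2*j+1)"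
    by (rule frac_le[OF _ num _ den]) (use c in auto)
  finally show ?thesis using c_def by simp
qed

lemma B_summable:
  assumes yz: "norm (y*z) < 1" and x: "norm x < (1 - norm (y*z))^2"
  shows "summable (\<lambda>j. norm y * norm x ^ (j+1) / (1 - norm (y*z)) ^ (2*j+1))"
proof -
  define c where "c = 1 - norm (y*z)"
  have c: "c > 0" using yz c_def by simp
  have r: "norm x / c^2 < 1" using x c c_def by simp
  have e: "norm y * norm x ^ (j+1) / c ^ (2*j+1) = (norm y * norm x / c) * (norm x / c^2) ^ j" for j
  proof -
    have cc: "c ^ (2*j+1) = c * (c^2)^j" by (simp add: power_mult power_add)
    have "c \<noteq> 0" "(c^2)^j \<noteq> 0" using c by auto
    then show ?thesis unfolding cc by (simp add: power_divide field_simps)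
  qed
  have "summable (\<lambda>j. (norm y * norm x / c) * (norm x / c^2) ^ j)"
    by (rule summable_mult) (rule summable_geometric, use r c in simp)
  then show ?thesis using e c_def by simp
qed

lemma total:
  assumes t: "norm t \<le> 1" and yz: "norm (y*z) < 1" and x: "norm x < (1 - norm (y*z))^2"
  shows "(W x y t z has_sum (\<Sum>j. F j x y t z)) {cs. validc cs} \<and> summable (\<lambda>j. F j x y t z)"
proof -
  define X Y T Z where "X = complex_of_real (norm x)" and "Y = complex_of_real (norm y)"
    and "T = complex_of_real (norm t)" and "Z = complex_of_real (norm z)"
  have nT: "norm T \<le> 1" using t T_def by simp
  have nYZ: "norm (Y*Z) = norm (y*z)" by (simp add: Y_def Z_def norm_mult)
  have nX: "norm X = norm x" "norm Y = norm y" by (simp_all add: X_def Y_def)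
  have WX: "W X Y T Z cs = complex_of_real (norm (W x y t z cs))" for cs
    by (simp add: W_def X_def Y_def T_def Z_def norm_mult norm_power)
  define g where "g j = Re (F j X Y T Z)" for j
  have hs: "((\<lambda>cs. norm (W x y t z cs)) has_sum g j) (Vj j)" for j
    using has_sum_Re[OF sumV[OF nT, of Y Z X j, THEN conjunct1]] WX yz nYZ g_def by simp
  have g0: "g j \<ge> 0" for j using has_sum_nonneg[OF hs] by simp
  have gB: "norm (g j) \<le> norm y * norm x ^ (j+1) / (1 - norm (y*z)) ^ (2*j+1)" for j
  proof -
    have "norm (g j) \<le> norm (F j X Y T Z)" unfolding g_def by (rule abs_Re_le_cmod[simplified real_norm_def[symmetric]])
    also have "\<dots> \<le> norm Y * norm X ^ (j+1) / (1 - norm (Y*Z)) ^ (2*j+1)"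
      by (rule F_bound[OF nT]) (use nYZ yz in simp)
    finally show ?thesis using nX nYZ by simp
  qed
  have gs: "g summable_on UNIV"
    by (rule summable_nonneg_imp_summable_on[OF summable_comparison_test'[OF B_summable[OF yz x] gB] g0])
  have sig: "(\<lambda>p. norm (W x y t z (snd p))) summable_on Sigma UNIV Vj"
    by (rule summable_on_SigmaI[where g=g]) (use hs gs in auto)
  have b1: "\<And>a. a \<in> Sigma UNIV Vj \<Longrightarrow> (length (snd a) - 1, snd a) = a"
    by (auto simp: Vj_def)
  have b2: "\<And>a. a \<in> Sigma UNIV Vj \<Longrightarrow> snd a \<in> {cs. validc cs}"
    by (auto simp: Vj_def)
  have b4: "\<And>b. b \<in> {cs. validc cs} \<Longrightarrow> (length b - 1, b) \<in> Sigma UNIV Vj"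
    by (auto simp: Vj_def validc_def)
  have "((\<lambda>p. norm (W x y t z (snd p))) summable_on Sigma UNIV Vj) = ((\<lambda>cs. norm (W x y t z cs)) summable_on {cs. validc cs})"
    by (rule summable_on_reindex_bij_witness[where j=snd and i="\<lambda>cs. (length cs - 1, cs)"])
       (use b1 b2 b4 in auto)
  then have ns: "(\<lambda>cs. norm (W x y t z cs)) summable_on {cs. validc cs}" using sig by simp
  have ws: "W x y t z summable_on {cs. validc cs}" by (rule abs_summable_summable[OF ns])
  define S where "S = infsum (W x y t z) {cs. validc cs}"
  have hsW: "(W x y t z has_sum S) {cs. validc cs}" using ws S_def by (simp add: has_sum_infsum)
  have "((\<lambda>p. W x y t z (snd p)) has_sum S) (Sigma UNIV Vj) = (W x y t z has_sum S) {cs. validc cs}"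
    by (rule has_sum_reindex_bij_witness[where j=snd and i="\<lambda>cs. (length cs - 1, cs)"])
       (use b1 b2 b4 in auto)
  then have hsS: "((\<lambda>p. W x y t z (snd p)) has_sum S) (Sigma UNIV Vj)" using hsW by simp
  have "((\<lambda>j. F j x y t z) has_sum S) UNIV"
    by (rule has_sum_SigmaD[OF hsS]) (use sumV[OF t yz] in simp)
  then have "(\<lambda>j. F j x y t z) sums S" by (rule has_sum_imp_sums)
  then show ?thesis using hsW by (simp add: sums_iff)
qed

definition mkP :: "(nat \<times> nat) list \<Rightarrow> cell set" where
  "mkP cs = {(int k, int y) | k y. k < length cs \<and> fst (cs!k) \<le> y \<and> y \<le> snd (cs!k)}"

lemma Max_int_ivl: "(a::int) \<le> b \<Longrightarrow> Max {a..b} = b"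
  by (rule Max_eqI) auto

lemma Min_int_ivl: "(a::int) \<le> b \<Longrightarrow> Min {a..b} = a"
  by (rule Min_eqI) auto

lemma Min_int_ivl0: "0 < n \<Longrightarrow> Min {0..<(n::int)} = 0"
  by (rule Min_eqI) auto

lemma column_mkP: "column (mkP cs) i =
   (if 0 \<le> i \<and> nat i < length cs then {int (fst (cs!nat i)) .. int (snd (cs!nat i))} else {})"
proof -
  have "y \<in> column (mkP cs) i \<longleftrightarrow> y \<in> (if 0 \<le> i \<and> nat i < length cs then {int (fst (cs!nat i)) .. int (snd (cs!nat i))} else {})" for y
  proof
    assume "y \<in> column (mkP cs) i"
    then obtain k y' where "i = int k" "y = int y'" "k < length cs" "fst (cs!k) \<le> y'" "y' \<le> snd (cs!k)"
      by (auto simp: column_def mkP_def)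
    then show "y \<in> (if 0 \<le> i \<and> nat i < length cs then {int (fst (cs!nat i)) .. int (snd (cs!nat i))} else {})" by auto
  next
    assume a: "y \<in> (if 0 \<le> i \<and> nat i < length cs then {int (fst (cs!nat i)) .. int (snd (cs!nat i))} else {})"
    then have i: "0 \<le> i" "nat i < length cs" and y: "int (fst (cs!nat i)) \<le> y" "y \<le> int (snd (cs!nat i))"
      by (auto split: if_splits)
    have "y \<ge> 0" using y(1) by linarith
    then have "(int (nat i), int (nat y)) \<in> mkP cs" unfolding mkP_def using i y by fastforce
    then show "y \<in> column (mkP cs) i" using i \<open>y \<ge> 0\<close> by (simp add: column_def)
  qed
  then show ?thesis by blast
qed

lemma mkP_mem: "(int k, int y) \<in> mkP cs \<longleftrightarrow> k < length cs \<and> fst (cs!k) \<le> y \<and> y \<le> snd (cs!k)"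
  by (auto simp: mkP_def)

lemma mkP_elem: "p \<in> mkP cs \<Longrightarrow> \<exists>k y. p = (int k, int y) \<and> k < length cs \<and> fst (cs!k) \<le> y \<and> y \<le> snd (cs!k)"
  by (auto simp: mkP_def)

lemma validc_col: "validc cs \<Longrightarrow> k < length cs \<Longrightarrow> fst (cs!k) \<le> snd (cs!k)"
  by (auto simp: validc_def nestc_iff)

lemma validc_mono: "validc cs \<Longrightarrow> k \<le> k' \<Longrightarrow> k' < length cs \<Longrightarrow> fst (cs!k) \<le> fst (cs!k') \<and> snd (cs!k') \<le> snd (cs!k)"
  using nestc_mono[of cs k k'] by (auto simp: validc_def)

lemma validc_0: "validc cs \<Longrightarrow> fst (cs!0) = 0 \<and> 0 < length cs \<and> hd cs = cs!0"
  by (auto simp: validc_def hd_conv_nth)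

lemma fst_mkP: "validc cs \<Longrightarrow> fst ` mkP cs = {0..<int (length cs)}"
proof
  assume v: "validc cs"
  show "fst ` mkP cs \<subseteq> {0..<int (length cs)}" by (auto simp: mkP_def)
  show "{0..<int (length cs)} \<subseteq> fst ` mkP cs"
  proof
    fix i assume i: "i \<in> {0..<int (length cs)}"
    have "(int (nat i), int (fst (cs!nat i))) \<in> mkP cs"
      by (subst mkP_mem) (use validc_col[OF v, of "nat i"] i in auto)
    then show "i \<in> fst ` mkP cs" by (rule image_eqI[rotated]) (use i in simp)
  qed
qed

lemma snd_mkP: "validc cs \<Longrightarrow> snd ` mkP cs = {0..int (snd (cs!0))}"
proof
  assume v: "validc cs"
  show "snd ` mkP cs \<subseteq> {0..int (snd (cs!0))}"
  proof
    fix y assume "y \<in> snd ` mkP cs"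
    then obtain k y' where "y = int y'" "k < length cs" "y' \<le> snd (cs!k)" by (auto simp: mkP_def)
    then show "y \<in> {0..int (snd (cs!0))}" using validc_mono[OF v, of 0 k] by auto
  qed
  show "{0..int (snd (cs!0))} \<subseteq> snd ` mkP cs"
  proof
    fix y assume y: "y \<in> {0..int (snd (cs!0))}"
    then have "(0, int (nat y)) \<in> mkP cs" using validc_0[OF v] mkP_mem[of 0 "nat y" cs] by auto
    then show "y \<in> snd ` mkP cs" using y by force
  qed
qed

lemma finite_mkP: "finite (mkP cs)"
proof -
  have "mkP cs \<subseteq> (\<lambda>(k,y). (int k, int y)) ` ({..<length cs} \<times> {..Max (snd ` set cs)})"
  proof
    fix p assume "p \<in> mkP cs"
    then obtain k y where p: "p = (int k, int y)" "k < length cs" "y \<le> snd (cs!k)" by (auto simp: mkP_def)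
    have mx: "snd (cs!k) \<le> Max (snd ` set cs)" using p(2) by (intro Max_ge) auto
    show "p \<in> (\<lambda>(k,y). (int k, int y)) ` ({..<length cs} \<times> {..Max (snd ` set cs)})"
    proof (rule image_eqI[where x="(k,y)"])
      have "y \<le> Max (snd ` set cs)" using p(3) mx by linarith
      then show "(k, y) \<in> {..<length cs} \<times> {..Max (snd ` set cs)}" using p(2) by simp
    qed (use p in simp)
  qed
  then show ?thesis by (rule finite_subset) auto
qed

lemma card_mkP: "validc cs \<Longrightarrow> card (mkP cs) = Warea cs"
proof -
  assume v: "validc cs"
  have eq: "mkP cs = (\<Union>k<length cs. (\<lambda>y. (int k, int y)) ` {fst (cs!k)..snd (cs!k)})"
    by (auto simp: mkP_def)
  have "card (mkP cs) = (\<Sum>k<length cs. card ((\<lambda>y. (int k, int y)) ` {fst (cs!k)..snd (cs!k)}))"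
    unfolding eq by (rule card_UN_disjoint) auto
  also have "\<dots> = (\<Sum>k<length cs. snd (cs!k) - fst (cs!k) + 1)"
  proof (rule sum.cong)
    fix k assume k: "k \<in> {..<length cs}"
    have "card ((\<lambda>y. (int k, int y)) ` {fst (cs!k)..snd (cs!k)}) = card {fst (cs!k)..snd (cs!k)}"
      by (rule card_image) (auto simp: inj_on_def)
    then show "card ((\<lambda>y. (int k, int y)) ` {fst (cs!k)..snd (cs!k)}) = snd (cs!k) - fst (cs!k) + 1"
      using validc_col[OF v, of k] k by simp
  qed simp
  also have "\<dots> = Warea cs"
    unfolding Warea_def sum_list_sum_nth by (simp add: atLeast0LessThan split_beta)
  finally show ?thesis .
qed

lemma weight_mkP: "validc cs \<Longrightarrow> weight x y t z (mkP cs) = W x y t z cs"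
proof -
  assume v: "validc cs"
  note v0 = validc_0[OF v]
  have "vcols (mkP cs) = length cs" by (simp add: vcols_def fst_mkP[OF v])
  moreover have "hrows (mkP cs) = snd (cs!0) + 1" by (simp add: hrows_def snd_mkP[OF v])
  moreover have "area (mkP cs) = Warea cs" by (simp add: area_def card_mkP[OF v])
  moreover have "cfirst (mkP cs) = snd (cs!0)"
  proof -
    have "Min (fst ` mkP cs) = 0" using v0 by (simp add: fst_mkP[OF v] Min_int_ivl0)
    then show ?thesis using v0 by (simp add: cfirst_def column_mkP)
  qed
  ultimately show ?thesis using v0 by (simp add: weight_def W_def)
qed

definition Rel :: "cell set \<Rightarrow> (cell \<times> cell) set" where
  "Rel P = {(p, q). p \<in> P \<and> q \<in> P \<and> edge_adj p q}"

lemma Rel_sym: "(Rel P)\<inverse> = Rel P"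
  by (auto simp: Rel_def edge_adj_def abs_minus_commute)

lemma conn_origin:
  assumes v: "validc cs" and k: "k < length cs" and y: "fst (cs!k) \<le> y" "y \<le> snd (cs!k)"
  shows "((int k, int y), (0, 0)) \<in> (Rel (mkP cs))\<^sup>*"
proof -
  have inP: "(int m, int y) \<in> mkP cs" if "m \<le> k" for m
    using validc_mono[OF v that k] y k that by (auto simp: mkP_mem)
  have A: "m \<le> k \<Longrightarrow> ((int m, int y), (0, int y)) \<in> (Rel (mkP cs))\<^sup>*" for m
  proof (induction m)
    case 0 then show ?case by simp
  next
    case (Suc m)
    have "((int (Suc m), int y), (int m, int y)) \<in> Rel (mkP cs)"
      using inP[of m] inP[of "Suc m"] Suc.prems by (auto simp: Rel_def edge_adj_def)
    then show ?case using Suc by (meson Suc_leD converse_rtrancl_into_rtrancl)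
  qed
  note v0 = validc_0[OF v]
  have inP0: "(0, int y') \<in> mkP cs" if "y' \<le> snd (cs!0)" for y'
    using v0 that mkP_mem[of 0 y' cs] by simp
  have B: "y' \<le> snd (cs!0) \<Longrightarrow> ((0, int y'), (0, 0)) \<in> (Rel (mkP cs))\<^sup>*" for y'
  proof (induction y')
    case 0 then show ?case by simp
  next
    case (Suc m)
    have "((0, int (Suc m)), (0, int m)) \<in> Rel (mkP cs)"
      using inP0[of m] inP0[of "Suc m"] Suc.prems by (auto simp: Rel_def edge_adj_def)
    then show ?case using Suc by (meson Suc_leD converse_rtrancl_into_rtrancl)
  qed
  have "y \<le> snd (cs!0)" using validc_mono[OF v, of 0 k] k y by simp
  then show ?thesis using A[of k] B[of y] by (meson order_refl rtrancl_trans)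
qed

lemma mkP_polyomino: "validc cs \<Longrightarrow> polyomino (mkP cs)"
proof -
  assume v: "validc cs"
  have o: "c \<in> mkP cs \<Longrightarrow> (c, (0,0)) \<in> (Rel (mkP cs))\<^sup>*" for c
    using conn_origin[OF v] by (auto simp: mkP_def)
  have o2: "c \<in> mkP cs \<Longrightarrow> ((0,0), c) \<in> (Rel (mkP cs))\<^sup>*" for c
  proof -
    assume "c \<in> mkP cs"
    then have "(c, (0,0)) \<in> ((Rel (mkP cs))\<inverse>)\<^sup>*" using o Rel_sym by simp
    then show ?thesis by (simp add: rtrancl_converse)
  qed
  have ne: "(0,0) \<in> mkP cs" using validc_0[OF v] mkP_mem[of 0 0 cs] by simp
  have all: "\<forall>c\<in>mkP cs. \<forall>d\<in>mkP cs. (c, d) \<in> (Rel (mkP cs))\<^sup>*"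
    using o o2 by (meson rtrancl_trans)
  show ?thesis unfolding polyomino_def
    using finite_mkP ne all unfolding Rel_def by blast
qed

lemma mkP_CPbu: "validc cs \<Longrightarrow> mkP cs \<in> CPbu"
proof -
  assume v: "validc cs"
  note v0 = validc_0[OF v]
  have colconv: "\<forall>i y1 y2 y. y1 \<in> column (mkP cs) i \<longrightarrow> y2 \<in> column (mkP cs) i \<longrightarrow> y1 \<le> y \<longrightarrow> y \<le> y2 \<longrightarrow> y \<in> column (mkP cs) i"
    by (auto simp: column_mkP split: if_splits)
  have rowconv: "\<forall>j x1 x2 x. x1 \<in> row (mkP cs) j \<longrightarrow> x2 \<in> row (mkP cs) j \<longrightarrow> x1 \<le> x \<longrightarrow> x \<le> x2 \<longrightarrow> x \<in> row (mkP cs) j"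
  proof (intro allI impI)
    fix j x1 x2 x assume a: "x1 \<in> row (mkP cs) j" "x2 \<in> row (mkP cs) j" "x1 \<le> x" "x \<le> x2"
    obtain k1 y1 where 1: "x1 = int k1" "j = int y1" using a(1) by (auto simp: row_def mkP_def)
    obtain k2 where 2: "x2 = int k2" "k2 < length cs" "fst (cs!k2) \<le> y1" "y1 \<le> snd (cs!k2)"
      using a(2) 1 by (auto simp: row_def mkP_def)
    obtain m where m: "x = int m" using a(3) 1 by (metis int_nat_eq of_nat_0_le_iff order_trans)
    have mk: "m \<le> k2" using a(4) m 2 by simp
    have "(int m, int y1) \<in> mkP cs"
      using validc_mono[OF v mk 2(2)] 2 mk by (simp add: mkP_mem)
    then show "x \<in> row (mkP cs) j" using m 1 by (simp add: row_def)
  qed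
  have norm: "normalized (mkP cs)"
    using v0 by (simp add: normalized_def fst_mkP[OF v] snd_mkP[OF v] Min_int_ivl0 Min_int_ivl)
  have nest: "\<forall>j\<in>fst ` mkP cs. \<forall>s\<in>fst ` mkP cs. j < s \<longrightarrow> utop (mkP cs) s \<le> utop (mkP cs) j \<and> bbot (mkP cs) s \<ge> bbot (mkP cs) j"
  proof (intro ballI impI)
    fix j s assume j: "j \<in> fst ` mkP cs" and s: "s \<in> fst ` mkP cs" and js: "j < s"
    then have j': "0 \<le> j" "nat j < length cs" and s': "0 \<le> s" "nat s < length cs" using fst_mkP[OF v] by auto
    have le: "nat j \<le> nat s" using js by simp
    have cj: "fst (cs!nat j) \<le> snd (cs!nat j)" and cs': "fst (cs!nat s) \<le> snd (cs!nat s)"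
      using validc_col[OF v] j' s' by auto
    show "utop (mkP cs) s \<le> utop (mkP cs) j \<and> bbot (mkP cs) s \<ge> bbot (mkP cs) j"
      using validc_mono[OF v le s'(2)] j' s' cj cs'
      by (simp add: utop_def bbot_def column_mkP Max_int_ivl Min_int_ivl)
  qed
  show ?thesis unfolding CPbu_def convex_poly_def
    using mkP_polyomino[OF v] colconv rowconv norm nest by blast
qed

lemma mkP_inj: "inj_on mkP {cs. validc cs}"
proof (rule inj_onI)
  fix cs cs' assume v: "cs \<in> {cs. validc cs}" and v': "cs' \<in> {cs. validc cs}" and e: "mkP cs = mkP cs'"
  have l: "length cs = length cs'" using fst_mkP[of cs] fst_mkP[of cs'] v v' e by (metis atLeastLessThan_empty_iff2 atLeastLessThan_inj(2) mem_Collect_eq not_less_iff_gr_or_eq of_nat_0_less_iff validc_0 nat_int)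
  show "cs = cs'"
  proof (rule nth_equalityI[OF l])
    fix k assume k: "k < length cs"
    have c: "column (mkP cs) (int k) = column (mkP cs') (int k)" using e by simp
    have a: "fst (cs!k) \<le> snd (cs!k)" "fst (cs'!k) \<le> snd (cs'!k)" using validc_col v v' k l by auto
    have "{int (fst (cs!k))..int (snd (cs!k))} = {int (fst (cs'!k))..int (snd (cs'!k))}"
      using c k l by (simp add: column_mkP)
    then show "cs!k = cs'!k" using a by (simp add: prod_eq_iff)
  qed
qed

lemma ivt:
  assumes "(a,b) \<in> (Rel P)\<^sup>*" "a \<in> P"
  shows "\<forall>i. fst a \<le> i \<and> i \<le> fst b \<longrightarrow> i \<in> fst ` P"
  using assms(1)
proof (induction rule: rtrancl_induct)
  case base
  then show ?case using assms(2) by force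
next
  case (step b c)
  then have cP: "c \<in> P" and e: "\<bar>fst b - fst c\<bar> + \<bar>snd b - snd c\<bar> = 1"
    by (auto simp: Rel_def edge_adj_def)
  have d: "fst c \<le> fst b + 1" using e by linarith
  show ?case
  proof (intro allI impI)
    fix i assume i: "fst a \<le> i \<and> i \<le> fst c"
    show "i \<in> fst ` P"
    proof (cases "i \<le> fst b")
      case True then show ?thesis using step.IH i by blast
    next
      case False then have "i = fst c" using i d by linarith
      then show ?thesis using cP by force
    qed
  qed
qed

lemma CPbu_mkP:
  assumes P: "P \<in> CPbu"
  shows "\<exists>cs. validc cs \<and> P = mkP cs"
proof -
  have fin: "finite P" and ne: "P \<noteq> {}" and conn: "\<forall>c\<in>P. \<forall>d\<in>P. (c,d) \<in> (Rel P)\<^sup>*"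
    and colc: "\<And>i y1 y2 y. y1 \<in> column P i \<Longrightarrow> y2 \<in> column P i \<Longrightarrow> y1 \<le> y \<Longrightarrow> y \<le> y2 \<Longrightarrow> y \<in> column P i"
    and mx: "Min (fst ` P) = 0" and my: "Min (snd ` P) = 0"
    and nest: "\<And>j s. j \<in> fst ` P \<Longrightarrow> s \<in> fst ` P \<Longrightarrow> j < s \<Longrightarrow> utop P s \<le> utop P j \<and> bbot P s \<ge> bbot P j"
    using P unfolding CPbu_def convex_poly_def polyomino_def normalized_def Rel_def by blast+
  define X where "X = fst ` P"
  have finX: "finite X" and neX: "X \<noteq> {}" using fin ne X_def by auto
  have X0: "0 \<in> X" using Min_in[OF finX neX] mx X_def by simp
  have Xge: "x \<in> X \<Longrightarrow> 0 \<le> x" for x using Min_le[OF finX, of x] mx X_def by simp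
  define M where "M = Max X"
  have MX: "M \<in> X" and Mge: "x \<in> X \<Longrightarrow> x \<le> M" for x using Max_in[OF finX neX] Max_ge[OF finX] M_def by auto
  have Xeq: "X = {0..M}"
  proof
    show "X \<subseteq> {0..M}" using Xge Mge by auto
    show "{0..M} \<subseteq> X"
    proof
      fix i assume i: "i \<in> {0..M}"
      obtain a where a: "a \<in> P" "fst a = 0" using X0 X_def by auto
      obtain b where b: "b \<in> P" "fst b = M" using MX X_def by auto
      have "(a,b) \<in> (Rel P)\<^sup>*" using conn a b by blast
      then show "i \<in> X" using ivt[of a b P] a b i X_def by auto
    qed
  qed
  have finY: "finite (snd ` P)" and neY: "snd ` P \<noteq> {}" using fin ne by auto
  have Yge: "(i, y) \<in> P \<Longrightarrow> 0 \<le> y" for i y using Min_le[OF finY, of y] my by force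
  have colfin: "finite (column P i)" for i
    by (rule finite_subset[OF _ finY]) (force simp: column_def)
  have colne: "i \<in> X \<Longrightarrow> column P i \<noteq> {}" for i by (force simp: X_def column_def)
  have coleq: "i \<in> X \<Longrightarrow> column P i = {bbot P i..utop P i}" for i
  proof
    assume i: "i \<in> X"
    show "column P i \<subseteq> {bbot P i..utop P i}"
      using Min_le[OF colfin] Max_ge[OF colfin] by (auto simp: bbot_def utop_def)
    show "{bbot P i..utop P i} \<subseteq> column P i"
    proof
      fix y assume y: "y \<in> {bbot P i..utop P i}"
      show "y \<in> column P i"
        by (rule colc[of "bbot P i" i "utop P i"])
           (use Min_in[OF colfin colne[OF i]] Max_in[OF colfin colne[OF i]] y in \<open>auto simp: bbot_def utop_def\<close>)
    qed
  qed
  have bu: "i \<in> X \<Longrightarrow> bbot P i \<le> utop P i" for i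
    using coleq colne by fastforce
  have bge: "i \<in> X \<Longrightarrow> 0 \<le> bbot P i" for i
  proof -
    assume i: "i \<in> X"
    have "bbot P i \<in> column P i" using Min_in[OF colfin colne[OF i]] by (simp add: bbot_def)
    then show ?thesis using Yge by (auto simp: column_def)
  qed
  have b0: "bbot P 0 = 0"
  proof -
    obtain p where p: "p \<in> P" "snd p = 0" using Min_in[OF finY neY] my by auto
    define x0 where "x0 = fst p"
    have x0: "x0 \<in> X" using p x0_def X_def by auto
    have "0 \<in> column P x0" using p x0_def by (cases p) (auto simp: column_def)
    then have "bbot P x0 \<le> 0" unfolding bbot_def using Min_le[OF colfin] by blast
    moreover have "bbot P 0 \<le> bbot P x0"
    proof (cases "x0 = 0")
      case False
      then have "0 < x0" using Xge[OF x0] by simp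
      then show ?thesis using nest[of 0 x0] X0 x0 X_def by auto
    qed simp
    ultimately show ?thesis using bge[OF X0] by simp
  qed
  define n where "n = Suc (nat M)"
  define cs where "cs = map (\<lambda>k. (nat (bbot P (int k)), nat (utop P (int k)))) [0..<n]"
  have lcs: "length cs = n" by (simp add: cs_def)
  have csk: "k < n \<Longrightarrow> cs!k = (nat (bbot P (int k)), nat (utop P (int k)))" for k
    by (simp add: cs_def)
  have kX: "int k \<in> X \<longleftrightarrow> k < n" for k
  proof -
    have "int k \<in> X \<longleftrightarrow> int k \<le> M" using Xeq by auto
    also have "\<dots> \<longleftrightarrow> k < n" using Xge[OF MX] by (simp add: n_def less_Suc_eq_le le_nat_iff)
    finally show ?thesis .
  qed
  have vc: "validc cs"
    unfolding validc_def nestc_iff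
  proof (intro conjI allI impI)
    show "cs \<noteq> []" by (simp add: cs_def n_def)
    have "cs \<noteq> []" by (simp add: cs_def n_def)
    then show "fst (hd cs) = 0" using b0 csk[of 0] hd_conv_nth[of cs] by (simp add: n_def)
  next
    fix k assume k: "k < length cs"
    then show "fst (cs!k) \<le> snd (cs!k)" using csk[of k] bu[of "int k"] kX[of k] lcs by (simp add: nat_mono)
  next
    fix k assume k: "Suc k < length cs"
    have "utop P (int (Suc k)) \<le> utop P (int k) \<and> bbot P (int (Suc k)) \<ge> bbot P (int k)"
      using nest[of "int k" "int (Suc k)"] kX[of k] kX[of "Suc k"] k lcs X_def by simp
    then show "fst (cs!k) \<le> fst (cs!Suc k)" "snd (cs!Suc k) \<le> snd (cs!k)"
      using csk[of k] csk[of "Suc k"] k lcs by (auto simp: nat_mono)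
  qed
  have "P = mkP cs"
  proof
    show "P \<subseteq> mkP cs"
    proof
      fix p assume p: "p \<in> P"
      obtain i y where pi: "p = (i, y)" by (cases p)
      have iX: "i \<in> X" using p pi X_def by force
      have y0: "0 \<le> y" using Yge p pi by simp
      have i0: "0 \<le> i" using Xge[OF iX] .
      have yc: "y \<in> {bbot P i..utop P i}" using coleq[OF iX] p pi by (auto simp: column_def)
      have kn: "nat i < n" using kX[of "nat i"] iX i0 by simp
      have "(int (nat i), int (nat y)) \<in> mkP cs"
        by (subst mkP_mem) (use kn lcs csk[OF kn] yc i0 y0 bge[OF iX] in \<open>auto simp: nat_mono\<close>)
      then show "p \<in> mkP cs" using pi i0 y0 by simp
    qed
    show "mkP cs \<subseteq> P"
    proof
      fix p assume p: "p \<in> mkP cs"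
      then obtain k y where pk: "p = (int k, int y)" "k < length cs" "fst (cs!k) \<le> y" "y \<le> snd (cs!k)"
        using mkP_elem by blast
      have kn: "k < n" using pk lcs by simp
      have kX': "int k \<in> X" using kX kn by simp
      have "int y \<in> {bbot P (int k)..utop P (int k)}"
        using pk(3,4) csk[OF kn] bge[OF kX'] bu[OF kX'] by auto
      then have "int y \<in> column P (int k)" using coleq[OF kX'] by simp
      then show "p \<in> P" using pk by (simp add: column_def)
    qed
  qed
  then show ?thesis using vc by blast
qed

lemma CPbu_eq: "CPbu = mkP ` {cs. validc cs}"
  using CPbu_mkP mkP_CPbu by blast

lemma main_general:
  assumes t: "norm t \<le> 1" and yz: "norm (y*z) < 1" and x: "norm x < (1 - norm (y*z))^2"
  shows "(weight x y t z has_sum (\<Sum>j. F j x y t z)) CPbu \<and> summable (\<lambda>j. F j x y t z)"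
proof -
  note T = total[OF t yz x]
  have "(weight x y t z has_sum (\<Sum>j. F j x y t z)) CPbu \<longleftrightarrow> ((weight x y t z \<circ> mkP) has_sum (\<Sum>j. F j x y t z)) {cs. validc cs}"
    unfolding CPbu_eq by (rule has_sum_reindex[OF mkP_inj])
  also have "\<dots> \<longleftrightarrow> (W x y t z has_sum (\<Sum>j. F j x y t z)) {cs. validc cs}"
    by (rule has_sum_cong) (simp add: weight_mkP)
  finally show ?thesis using T by simp
qed

lemma ev_small: "\<forall>\<^sub>F p in nhds ((0::complex), (0::complex), (0::complex)).
   norm (fst p) < 1/4 \<and> norm (fst (snd p)) < 1/2 \<and> norm (snd (snd p)) < 1/2"
proof -
  have id: "((\<lambda>p. p) \<longlongrightarrow> ((0::complex), (0::complex), (0::complex))) (nhds ((0::complex), (0::complex), (0::complex)))"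
    by (rule filterlim_ident)
  have a: "((\<lambda>p. norm (fst p)) \<longlongrightarrow> 0) (nhds ((0::complex), (0::complex), (0::complex)))"
    using tendsto_norm_zero[OF tendsto_fst[OF id, simplified]] by simp
  have b: "((\<lambda>p. norm (fst (snd p))) \<longlongrightarrow> 0) (nhds ((0::complex), (0::complex), (0::complex)))"
    using tendsto_norm_zero[OF tendsto_fst[OF tendsto_snd[OF id], simplified]] by simp
  have c: "((\<lambda>p. norm (snd (snd p))) \<longlongrightarrow> 0) (nhds ((0::complex), (0::complex), (0::complex)))"
    using tendsto_norm_zero[OF tendsto_snd[OF tendsto_snd[OF id], simplified]] by simp
  show ?thesis
    using order_tendstoD(2)[OF a, of "1/4"] order_tendstoD(2)[OF b, of "1/2"] order_tendstoD(2)[OF c, of "1/2"]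
    by (auto intro: eventually_conj)
qed

lemma small_ok:
  fixes x y z :: complex
  assumes "norm x < 1/4" "norm y < 1/2" "norm z < 1/2"
  shows "norm (y*z) < 1/4" "norm x < (1 - norm (y*z))^2"
proof -
  have "norm (y*z) = norm y * norm z" by (simp add: norm_mult)
  also have "\<dots> \<le> 1/2 * (1/2)" using assms by (intro mult_mono) auto
  finally have a: "norm (y*z) \<le> 1/4" by simp
  have "norm (y*z) < 1/4"
  proof -
    have "norm y * norm z < 1/2 * (1/2)"
      using assms by (intro mult_strict_mono) auto
    then show ?thesis by (simp add: norm_mult)
  qed
  then show "norm (y*z) < 1/4" .
  have "(3/4::real)^2 \<le> (1 - norm (y*z))^2" using a by (intro power_mono) auto
  then show "norm x < (1 - norm (y*z))^2" using assms(1) by (simp add: power2_eq_square)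
qed

lemma sum_t1:
  fixes x y z :: complex
  assumes yz: "norm (y*z) < 1" and x: "norm x < (1 - norm (y*z))^2"
  shows "(\<Sum>j. F j x y 1 z) = x * y * (1 - y * z) / ((1 - y * z)\<^sup>2 - x)"
proof -
  define w where "w = y*z"
  have w1: "1 - w \<noteq> 0" using yz w_def by auto
  have nw: "1 - norm w \<le> norm (1 - w)" using norm_triangle_ineq2[of 1 w] by simp
  have "(1 - norm w)^2 \<le> norm (1 - w)^2" using nw yz w_def by (intro power_mono) auto
  then have xr: "norm x < norm ((1 - w)^2)" using x w_def by (simp add: norm_power)
  define r where "r = x / (1 - w)^2"
  have r: "norm r < 1" using xr w1 by (simp add: r_def norm_divide)
  have d2: "(1 - w)^2 - x \<noteq> 0" using xr by auto
  have Fj: "F j x y 1 z = (x*y/(1-w)) * r^j" for j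
  proof -
    have "(\<Prod>i = 1..j. (1 - y * 1 ^ i * z)\<^sup>2) = ((1 - w)^2)^j" by (simp add: w_def)
    then show ?thesis unfolding F_def r_def w_def using w1[unfolded w_def]
      by (simp add: power_divide power_mult[symmetric] field_simps power_add)
  qed
  have "(\<lambda>j. (x*y/(1-w)) * r^j) sums ((x*y/(1-w)) * (1 / (1 - r)))"
    by (rule sums_mult) (use geometric_sums[OF r] in \<open>simp add: divide_inverse\<close>)
  then have "(\<Sum>j. F j x y 1 z) = (x*y/(1-w)) * (1 / (1 - r))" using Fj by (simp add: sums_iff)
  also have "\<dots> = x * y * (1 - w) / ((1 - w)\<^sup>2 - x)"
  proof -
    have w2: "(1-w)^2 \<noteq> 0" using w1 by simp
    have e1: "1 - r = ((1-w)^2 - x)/(1-w)^2" using w2 by (simp add: r_def diff_divide_distrib)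
    have e2: "1 / (1 - r) = (1-w)^2/((1-w)^2 - x)" unfolding e1 by simp
    show ?thesis unfolding e2 using w1 d2 by (simp add: power2_eq_square)
  qed
  finally show ?thesis by (simp add: w_def)
qed

theorem lemma3p1:
  shows "(\<forall>\<^sub>F (x, y, z) in nhds ((0::complex), (0::complex), (0::complex)).
            (weight x y 1 z has_sum (x * y * (1 - y * z) / ((1 - y * z)\<^sup>2 - x))) CPbu)
       \<and> (\<forall>t::complex. norm t < 1 \<longrightarrow>
            (\<forall>\<^sub>F (x, y, z) in nhds ((0::complex), (0::complex), (0::complex)).
              summable (\<lambda>j::nat. y * (x * t) ^ (j + 1) /
                 ((1 - y * t ^ (j + 1) * z) * (\<Prod>i = 1..j. (1 - y * t ^ i * z)\<^sup>2)))
            \<and> (weight x y t z has_sum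
                 (\<Sum>j::nat. y * (x * t) ^ (j + 1) /
                   ((1 - y * t ^ (j + 1) * z) * (\<Prod>i = 1..j. (1 - y * t ^ i * z)\<^sup>2)))) CPbu))"
proof
  show "\<forall>\<^sub>F (x, y, z) in nhds ((0::complex), (0::complex), (0::complex)).
            (weight x y 1 z has_sum (x * y * (1 - y * z) / ((1 - y * z)\<^sup>2 - x))) CPbu"
  proof (rule eventually_mono[OF ev_small])
    fix p :: "complex \<times> complex \<times> complex"
    assume h: "norm (fst p) < 1/4 \<and> norm (fst (snd p)) < 1/2 \<and> norm (snd (snd p)) < 1/2"
    obtain x y z where p: "p = (x, y, z)" by (cases p) auto
    have s: "norm (y*z) < 1/4" "norm x < (1 - norm (y*z))^2" using small_ok[of x y z] h p by auto
    have yz: "norm (y*z) < 1" using s by simp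
    have "(weight x y 1 z has_sum (\<Sum>j. F j x y 1 z)) CPbu"
      using main_general[of 1 y z x] yz s by simp
    then show "case p of (x, y, z) \<Rightarrow> (weight x y 1 z has_sum (x * y * (1 - y * z) / ((1 - y * z)\<^sup>2 - x))) CPbu"
      using sum_t1[OF yz s(2)] p by simp
  qed
next
  show "\<forall>t::complex. norm t < 1 \<longrightarrow>
            (\<forall>\<^sub>F (x, y, z) in nhds ((0::complex), (0::complex), (0::complex)).
              summable (\<lambda>j::nat. y * (x * t) ^ (j + 1) /
                 ((1 - y * t ^ (j + 1) * z) * (\<Prod>i = 1..j. (1 - y * t ^ i * z)\<^sup>2)))
            \<and> (weight x y t z has_sum
                 (\<Sum>j::nat. y * (x * t) ^ (j + 1) /
                   ((1 - y * t ^ (j + 1) * z) * (\<Prod>i = 1..j. (1 - y * t ^ i * z)\<^sup>2)))) CPbu)"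
  proof (intro allI impI)
    fix t :: complex assume t: "norm t < 1"
    show "\<forall>\<^sub>F (x, y, z) in nhds ((0::complex), (0::complex), (0::complex)).
              summable (\<lambda>j::nat. y * (x * t) ^ (j + 1) /
                 ((1 - y * t ^ (j + 1) * z) * (\<Prod>i = 1..j. (1 - y * t ^ i * z)\<^sup>2)))
            \<and> (weight x y t z has_sum
                 (\<Sum>j::nat. y * (x * t) ^ (j + 1) /
                   ((1 - y * t ^ (j + 1) * z) * (\<Prod>i = 1..j. (1 - y * t ^ i * z)\<^sup>2)))) CPbu"
    proof (rule eventually_mono[OF ev_small])
      fix p :: "complex \<times> complex \<times> complex"
      assume h: "norm (fst p) < 1/4 \<and> norm (fst (snd p)) < 1/2 \<and> norm (snd (snd p)) < 1/2"
      obtain x y z where p: "p = (x, y, z)" by (cases p) auto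
      have s: "norm (y*z) < 1/4" "norm x < (1 - norm (y*z))^2" using small_ok[of x y z] h p by auto
      have yz: "norm (y*z) < 1" using s by simp
      have "(weight x y t z has_sum (\<Sum>j. F j x y t z)) CPbu \<and> summable (\<lambda>j. F j x y t z)"
        using main_general[of t y z x] yz s t by simp
      then show "case p of (x, y, z) \<Rightarrow> summable (\<lambda>j::nat. y * (x * t) ^ (j + 1) /
                 ((1 - y * t ^ (j + 1) * z) * (\<Prod>i = 1..j. (1 - y * t ^ i * z)\<^sup>2)))
            \<and> (weight x y t z has_sum
                 (\<Sum>j::nat. y * (x * t) ^ (j + 1) /
                   ((1 - y * t ^ (j + 1) * z) * (\<Prod>i = 1..j. (1 - y * t ^ i * z)\<^sup>2)))) CPbu"
        using p by (simp add: F_def)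
    qed
  qed
qed

end
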